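(* Let $\mathcal{M}=\langle M,\circ,e\rangle$ be an effective mge monoid and let $\mathcal{T}=\langle \Sigma^*\times\mathcal{M},Q,I,F,\Delta\rangle$ be an arbitrary (not necessarily real-time) functional monoidal finite-state transducer with $\langle\varepsilon,e\rangle\in L(\mathcal{T})$. Then there is a bimachine $\mathcal{B}=\langle\mathcal{M},\mathcal{A}_L,\mathcal{A}_R,\psi\rangle$ such that $\mathcal{A}_L$ has at most $2^{|Q|}$ states, $\mathcal{A}_R$ has at most $2^{|Q|}$ states, and $O_{\mathcal{B}}=O_{\mathcal{T}}$ (as partial functions $\Sigma^*\to M$).
   Context: A monoid $\langle M,\circ,e\rangle$ has right cancellation if $ac=bc$ implies $a=b$. A tuple $\langle m_1,\dots,m_n\rangle\in M^n$ is equalizable if there is $\langle x_1,\dots,x_n\rangle\in M^n$ (an equalizer) with $m_1x_1=\dots=m_nx_n$; an instance of an equalizer $\langle x_1,\dots,x_n\rangle$ is any $\langle x_1x,\dots,x_nx\rangle$ with $x\in M$; a most general equalizer (mge) is an equalizer of which every equalizer is an instance. An mge monoid is a monoid with right cancellation in which every equalizable pair has an mge. An element $m$ is invertible if $mn=e$ for some $n$ (denoted $m^{-1}$). An mge monoid is effective if (i) $M$ is represented as a recursive subset of $\mathbb{N}$ with computable operation, (ii) equality is decidable, (iii) it is decidable whether a pair is equalizable and there is a computable function $\eta:M^2\to M^2$ with $\eta(m,m')$ an mge of $\langle m,m'\rangle$ for every equalizable pair, (iv) inverses of invertible elements are computable. A monoidal finite-state transducer is $\mathcal{T}=\langle\Sigma^*\times\mathcal{M},Q,I,F,\Delta\rangle$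 with $\Sigma$ a finite alphabet, $Q$ finite, $I,F\subseteq Q$, and finite $\Delta\subseteq Q\times((\Sigma\cup\{\varepsilon\})\times M)\times Q$. The generalized transition relation $\Delta^*$ is the least set containing $\langle q,\langle\varepsilon,e\rangle,q\rangle$ for all $q$ and closed under: $\langle q_1,\langle u,w\rangle,q_2\rangle\in\Delta^*$ and $\langle q_2,\langle a,m\rangle,q_3\rangle\in\Delta$ imply $\langle q_1,\langle ua,wm\rangle,q_3\rangle\in\Delta^*$. $L(\mathcal{T})=\{\langle u,m\rangle:\exists p\in I,q\in F,\ \langle p,\langle u,m\rangle,q\rangle\in\Delta^*\}$. $\mathcal{T}$ is functional if $L(\mathcal{T})$ is (the graph of) a partial function, denoted $O_{\mathcal{T}}:\Sigma^*\to M$. A bimachine is $\mathcal{B}=\langle\mathcal{M},\mathcal{A}_L,\mathcal{A}_R,\psi\rangle$ where $\mathcal{A}_L=\langle\Sigma,L,s_L,L,\delta_L\rangle$ and $\mathcal{A}_R=\langle\Sigma,R,s_R,R,\delta_R\rangle$ are deterministic finite automata (all states final) and $\psi:L\times\Sigma\times R\to M$ is a partial function. Define $\psi^*(l,\varepsilon,r)=e$ and $\psi^*(l,t\sigma,r)=\psi^*(l,t,\delta_R(r,\sigma))\circ\psi(\delta_L^*(l,t),\sigma,r)$; the function represented by $\mathcal{B}$ is $O_{\mathcal{B}}(t)=\psi^*(s_L,t,s_R)$ (partial). *)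

theory Defs
  imports Main
begin

definition right_cancellation :: "'m::monoid_mult itself \<Rightarrow> bool" where
  "right_cancellation _ \<longleftrightarrow> (\<forall>a b c :: 'm. a * c = b * c \<longrightarrow> a = b)"

definition is_equalizer :: "'m::monoid_mult \<Rightarrow> 'm \<Rightarrow> 'm \<Rightarrow> 'm \<Rightarrow> bool" where
  "is_equalizer m1 m2 x1 x2 \<longleftrightarrow> m1 * x1 = m2 * x2"

definition equalizable :: "'m::monoid_mult \<Rightarrow> 'm \<Rightarrow> bool" where
  "equalizable m1 m2 \<longleftrightarrow> (\<exists>x1 x2. is_equalizer m1 m2 x1 x2)"

definition is_mge :: "'m::monoid_mult \<Rightarrow> 'm \<Rightarrow> 'm \<Rightarrow> 'm \<Rightarrow> bool" where
  "is_mge m1 m2 x1 x2 \<longleftrightarrow> is_equalizer m1 m2 x1 x2 \<and>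
     (\<forall>y1 y2. is_equalizer m1 m2 y1 y2 \<longrightarrow> (\<exists>x. y1 = x1 * x \<and> y2 = x2 * x))"

definition mge_monoid :: "'m::monoid_mult itself \<Rightarrow> bool" where
  "mge_monoid T \<longleftrightarrow> right_cancellation T \<and>
     (\<forall>m m' :: 'm. equalizable m m' \<longrightarrow> (\<exists>x1 x2. is_mge m m' x1 x2))"

section \<open>Monoidal finite-state transducers (alphabet = finite type 'a, None = \<epsilon>)\<close>

definition word_of :: "'a option \<Rightarrow> 'a list" where
  "word_of a = (case a of None \<Rightarrow> [] | Some s \<Rightarrow> [s])"

definition transducer :: "'q set \<Rightarrow> 'q set \<Rightarrow> 'q set \<Rightarrow> ('q \<times> ('a option \<times> 'm) \<times> 'q) set \<Rightarrow> bool" where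
  "transducer Q I F \<Delta> \<longleftrightarrow> finite Q \<and> I \<subseteq> Q \<and> F \<subseteq> Q \<and> finite \<Delta> \<and>
     (\<forall>(p, l, q) \<in> \<Delta>. p \<in> Q \<and> q \<in> Q)"

inductive_set gen_trans :: "('q \<times> ('a option \<times> 'm::monoid_mult) \<times> 'q) set \<Rightarrow> ('q \<times> ('a list \<times> 'm) \<times> 'q) set"
  for \<Delta> where
  refl: "(q, ([], 1), q) \<in> gen_trans \<Delta>"
| step: "(q1, (u, w), q2) \<in> gen_trans \<Delta> \<Longrightarrow> (q2, (a, m), q3) \<in> \<Delta> \<Longrightarrow>
         (q1, (u @ word_of a, w * m), q3) \<in> gen_trans \<Delta>"

definition trans_lang :: "'q set \<Rightarrow> 'q set \<Rightarrow> ('q \<times> ('a option \<times> 'm::monoid_mult) \<times> 'q) set \<Rightarrow> ('a list \<times> 'm) set" where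
  "trans_lang I F \<Delta> = {(u, m). \<exists>p\<in>I. \<exists>q\<in>F. (p, (u, m), q) \<in> gen_trans \<Delta>}"

definition functional :: "'q set \<Rightarrow> 'q set \<Rightarrow> ('q \<times> ('a option \<times> 'm::monoid_mult) \<times> 'q) set \<Rightarrow> bool" where
  "functional I F \<Delta> \<longleftrightarrow> (\<forall>u m m'. (u, m) \<in> trans_lang I F \<Delta> \<longrightarrow> (u, m') \<in> trans_lang I F \<Delta> \<longrightarrow> m = m')"

definition trans_output :: "'q set \<Rightarrow> 'q set \<Rightarrow> ('q \<times> ('a option \<times> 'm::monoid_mult) \<times> 'q) set \<Rightarrow> 'a list \<Rightarrow> 'm option" where
  "trans_output I F \<Delta> u = (if \<exists>m. (u, m) \<in> trans_lang I F \<Delta>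
      then Some (THE m. (u, m) \<in> trans_lang I F \<Delta>) else None)"

definition dfa :: "nat set \<Rightarrow> nat \<Rightarrow> (nat \<Rightarrow> 'a \<Rightarrow> nat) \<Rightarrow> bool" where
  "dfa S s \<delta> \<longleftrightarrow> finite S \<and> s \<in> S \<and> (\<forall>x\<in>S. \<forall>\<sigma>. \<delta> x \<sigma> \<in> S)"

definition dfa_star :: "(nat \<Rightarrow> 'a \<Rightarrow> nat) \<Rightarrow> nat \<Rightarrow> 'a list \<Rightarrow> nat" where
  "dfa_star \<delta> l t = foldl \<delta> l t"

text \<open>psi_rev takes the input word reversed, so that the recursion on t @ [\<sigma>] becomes
  structural recursion.\<close>
primrec psi_rev :: "(nat \<Rightarrow> 'a \<Rightarrow> nat) \<Rightarrow> (nat \<Rightarrow> 'a \<Rightarrow> nat) \<Rightarrow> (nat \<Rightarrow> 'a \<Rightarrow> nat \<Rightarrow> 'm::monoid_mult option)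
    \<Rightarrow> nat \<Rightarrow> 'a list \<Rightarrow> nat \<Rightarrow> 'm option" where
  "psi_rev \<delta>L \<delta>R \<psi> l [] r = Some 1"
| "psi_rev \<delta>L \<delta>R \<psi> l (\<sigma> # ts) r =
     (case psi_rev \<delta>L \<delta>R \<psi> l ts (\<delta>R r \<sigma>) of
        None \<Rightarrow> None
      | Some x \<Rightarrow> (case \<psi> (dfa_star \<delta>L l (rev ts)) \<sigma> r of
                     None \<Rightarrow> None
                   | Some y \<Rightarrow> Some (x * y)))"

definition psi_star :: "(nat \<Rightarrow> 'a \<Rightarrow> nat) \<Rightarrow> (nat \<Rightarrow> 'a \<Rightarrow> nat) \<Rightarrow> (nat \<Rightarrow> 'a \<Rightarrow> nat \<Rightarrow> 'm::monoid_mult option)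
    \<Rightarrow> nat \<Rightarrow> 'a list \<Rightarrow> nat \<Rightarrow> 'm option" where
  "psi_star \<delta>L \<delta>R \<psi> l t r = psi_rev \<delta>L \<delta>R \<psi> l (rev t) r"

lemma psi_star_Nil: "psi_star \<delta>L \<delta>R \<psi> l [] r = Some 1"
  by (simp add: psi_star_def)

lemma psi_star_snoc: "psi_star \<delta>L \<delta>R \<psi> l (t @ [\<sigma>]) r =
  (case psi_star \<delta>L \<delta>R \<psi> l t (\<delta>R r \<sigma>) of None \<Rightarrow> None
   | Some x \<Rightarrow> (case \<psi> (dfa_star \<delta>L l t) \<sigma> r of None \<Rightarrow> None | Some y \<Rightarrow> Some (x * y)))"
  proof -
  have "rev (t @ [\<sigma>]) = \<sigma> # rev t" by simp
  then show ?thesis unfolding psi_star_def by (simp only: psi_rev.simps rev_rev_ident)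
qed

definition bimachine_output :: "nat \<Rightarrow> (nat \<Rightarrow> 'a \<Rightarrow> nat) \<Rightarrow> nat \<Rightarrow> (nat \<Rightarrow> 'a \<Rightarrow> nat)
    \<Rightarrow> (nat \<Rightarrow> 'a \<Rightarrow> nat \<Rightarrow> 'm::monoid_mult option) \<Rightarrow> 'a list \<Rightarrow> 'm option" where
  "bimachine_output sL \<delta>L sR \<delta>R \<psi> t = psi_star \<delta>L \<delta>R \<psi> sL t sR"

end

theory Submission
  imports Defs
begin

lemma rc: "mge_monoid TYPE('m::monoid_mult) \<Longrightarrow> a * c = b * (c::'m) \<Longrightarrow> a = b"
  unfolding mge_monoid_def right_cancellation_def by blast

lemma lc:
  assumes M: "mge_monoid TYPE('m::monoid_mult)" and h: "(a::'m) * x = a * y"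
  shows "x = y"
proof -
  have "equalizable a a" unfolding equalizable_def is_equalizer_def by (rule exI[of _ 1], rule exI[of _ 1]) simp
  then obtain x1 x2 where m: "is_mge a a x1 x2" using M unfolding mge_monoid_def by blast
  have "is_equalizer a a 1 1" by (simp add: is_equalizer_def)
  then obtain s where s1: "1 = x1 * s" and s2: "1 = x2 * s" using m unfolding is_mge_def by blast
  have "(s * x1) * s = 1 * s" using s1 by (metis mult.assoc mult_1_left mult_1_right)
  hence a1: "s * x1 = 1" using rc[OF M] by blast
  have "(s * x2) * s = 1 * s" using s2 by (metis mult.assoc mult_1_left mult_1_right)
  hence a2: "s * x2 = 1" using rc[OF M] by blast
  have "x1 = x2" by (metis a2 s1 mult.assoc mult_1_left mult_1_right)
  moreover have "is_equalizer a a x y" using h by (simp add: is_equalizer_def)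
  then obtain t where "x = x1 * t" "y = x2 * t" using m unfolding is_mge_def by blast
  ultimately show ?thesis by simp
qed

definition eqzT :: "('q \<Rightarrow> 'm::monoid_mult) \<Rightarrow> 'q set \<Rightarrow> ('q \<Rightarrow> 'm) \<Rightarrow> bool" where
  "eqzT A C X \<longleftrightarrow> (\<forall>p\<in>C. \<forall>q\<in>C. A p * X p = A q * X q)"

lemma eqzTD: "eqzT A C X \<Longrightarrow> p \<in> C \<Longrightarrow> q \<in> C \<Longrightarrow> A p * X p = A q * X q"
  unfolding eqzT_def by blast

lemma eqzT_mono: "eqzT A C' X \<Longrightarrow> C \<subseteq> C' \<Longrightarrow> eqzT A C X"
  unfolding eqzT_def by blast

definition mgeT :: "('q \<Rightarrow> 'm::monoid_mult) \<Rightarrow> 'q set \<Rightarrow> ('q \<Rightarrow> 'm) \<Rightarrow> bool" where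
  "mgeT A C X \<longleftrightarrow> eqzT A C X \<and> (\<forall>Y. eqzT A C Y \<longrightarrow> (\<exists>s. \<forall>q\<in>C. Y q = X q * s))"

lemma mgeT_exists:
  assumes M: "mge_monoid TYPE('m::monoid_mult)" and fin: "finite C"
  shows "eqzT A C (Y::'q \<Rightarrow> 'm) \<Longrightarrow> \<exists>X. mgeT A C X"
  using fin
proof (induction C arbitrary: Y rule: finite_induct)
  case empty
  show ?case unfolding mgeT_def eqzT_def by simp
next
  case (insert c C)
  have "eqzT A C Y" using eqzT_mono[OF insert.prems] by blast
  then obtain X where X: "mgeT A C X" using insert.IH by blast
  show ?case
  proof (cases "C = {}")
    case True
    have "mgeT A (insert c C) (\<lambda>_. 1)" unfolding mgeT_def eqzT_def
    proof (intro conjI allI impI)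
      fix Z :: "'q \<Rightarrow> 'm"
      show "\<exists>s. \<forall>q\<in>insert c C. Z q = 1 * s" using True by (intro exI[of _ "Z c"]) simp
    qed (use True in simp)
    then show ?thesis by blast
  next
    case False
    then obtain c0 where c0: "c0 \<in> C" by blast
    define E where "E = A c0 * X c0"
    from X have Xe: "eqzT A C X" and Xg: "\<forall>Y. eqzT A C Y \<longrightarrow> (\<exists>s. \<forall>q\<in>C. Y q = X q * s)"
      unfolding mgeT_def by blast+
    obtain s where s: "\<forall>q\<in>C. Y q = X q * s" using Xg \<open>eqzT A C Y\<close> by blast
    have "E * s = A c0 * Y c0" using s c0 by (simp add: E_def mult.assoc)
    also have "\<dots> = A c * Y c" using eqzTD[OF insert.prems, of c0 c] c0 by simp
    finally have "is_equalizer E (A c) s (Y c)" by (simp add: is_equalizer_def)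
    hence "equalizable E (A c)" unfolding equalizable_def by blast
    then obtain a b where ab: "is_mge E (A c) a b" using M unfolding mge_monoid_def by blast
    define X' where "X' = (\<lambda>q. if q = c then b else X q * a)"
    have all: "\<forall>p\<in>insert c C. A p * X' p = E * a"
    proof
      fix p assume p: "p \<in> insert c C"
      show "A p * X' p = E * a"
      proof (cases "p = c")
        case True thus ?thesis using ab by (simp add: X'_def is_mge_def is_equalizer_def)
      next
        case False
        hence "p \<in> C" using p by simp
        hence "A p * X p = E" using eqzTD[OF Xe, of p c0] c0 unfolding E_def by simp
        thus ?thesis using False by (simp add: X'_def mult.assoc[symmetric])
      qed
    qed
    have "mgeT A (insert c C) X'"
      unfolding mgeT_def
    proof (intro conjI allI impI)
      show "eqzT A (insert c C) X'" using all unfolding eqzT_def by simp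
    next
      fix Z assume Z: "eqzT A (insert c C) Z"
      hence "eqzT A C Z" using eqzT_mono by blast
      then obtain t where t: "\<forall>q\<in>C. Z q = X q * t" using Xg by blast
      have "E * t = A c0 * Z c0" using t c0 by (simp add: E_def mult.assoc)
      also have "\<dots> = A c * Z c" using eqzTD[OF Z, of c0 c] c0 by simp
      finally have "is_equalizer E (A c) t (Z c)" by (simp add: is_equalizer_def)
      then obtain x where x: "t = a * x" "Z c = b * x" using ab unfolding is_mge_def by blast
      show "\<exists>s. \<forall>q\<in>insert c C. Z q = X' q * s"
        using t x insert.hyps(2) by (intro exI[of _ x]) (auto simp: X'_def mult.assoc)
    qed
    thus ?thesis by blast
  qed
qed

lemma const_mgeT:
  assumes M: "mge_monoid TYPE('m::monoid_mult)" and k: "\<forall>q\<in>C. A q = (k::'m)"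
  shows "mgeT A C (\<lambda>_. 1)"
  unfolding mgeT_def
proof (intro conjI allI impI)
  show "eqzT A C (\<lambda>_. 1)" using k by (simp add: eqzT_def)
next
  fix Y assume Y: "eqzT A C Y"
  show "\<exists>s. \<forall>q\<in>C. Y q = 1 * s"
  proof (cases "C = {}")
    case True thus ?thesis by simp
  next
    case False
    then obtain q0 where q0: "q0 \<in> C" by blast
    have "\<forall>q\<in>C. Y q = Y q0"
    proof
      fix q assume q: "q \<in> C"
      have "k * Y q = k * Y q0" using eqzTD[OF Y q q0] k q q0 by simp
      thus "Y q = Y q0" using lc[OF M] by blast
    qed
    thus ?thesis by auto
  qed
qed

lemma eqz_transfer:
  assumes M: "mge_monoid TYPE('m::monoid_mult)" and X: "mgeT A C (X::'q \<Rightarrow> 'm)"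
    and ZA: "eqzT A C Z" and ZB: "eqzT B C Z"
  shows "eqzT B C X"
proof -
  obtain s where s: "\<forall>q\<in>C. Z q = X q * s" using X ZA unfolding mgeT_def by blast
  show ?thesis unfolding eqzT_def
  proof (intro ballI)
    fix p q assume p: "p \<in> C" and q: "q \<in> C"
    have "(B p * X p) * s = B p * Z p" using s p by (simp add: mult.assoc)
    also have "\<dots> = B q * Z q" using eqzTD[OF ZB p q] .
    also have "\<dots> = (B q * X q) * s" using s q by (simp add: mult.assoc)
    finally show "B p * X p = B q * X q" using rc[OF M] by blast
  qed
qed

lemma mge_transfer:
  assumes M: "mge_monoid TYPE('m::monoid_mult)" and fin: "finite C" and X: "mgeT A C (X::'q \<Rightarrow> 'm)"
    and ZA: "eqzT A C Z" and ZB: "eqzT B C Z"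
  shows "mgeT B C X"
  unfolding mgeT_def
proof (intro conjI allI impI)
  show "eqzT B C X" by (rule eqz_transfer[OF M X ZA ZB])
next
  fix Y assume Y: "eqzT B C Y"
  obtain W where W: "mgeT B C W" using mgeT_exists[OF M fin ZB] by blast
  have "eqzT A C W" by (rule eqz_transfer[OF M W ZB ZA])
  then obtain s1 where s1: "\<forall>q\<in>C. W q = X q * s1" using X unfolding mgeT_def by blast
  obtain s2 where s2: "\<forall>q\<in>C. Y q = W q * s2" using W Y unfolding mgeT_def by blast
  show "\<exists>s. \<forall>q\<in>C. Y q = X q * s" using s1 s2 by (intro exI[of _ "s1 * s2"]) (simp add: mult.assoc)
qed



locale td =
  fixes Q I F :: "'q set" and \<Delta> :: "('q \<times> ('a option \<times> 'm::monoid_mult) \<times> 'q) set"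
  assumes M: "mge_monoid TYPE('m)" and tr: "transducer Q I F \<Delta>"
    and fn: "functional I F \<Delta>" and eps: "([], 1) \<in> trans_lang I F \<Delta>"
begin

abbreviation path :: "'q \<Rightarrow> 'a list \<Rightarrow> 'm \<Rightarrow> 'q \<Rightarrow> bool" where
  "path p u m q \<equiv> (p, (u, m), q) \<in> gen_trans \<Delta>"

lemma path_concat:
  assumes "path q v m2 r" shows "path p u m1 q \<Longrightarrow> path p (u @ v) (m1 * m2) r"
  using assms
proof (induction rule: gen_trans.induct)
  case (refl q)
  then show ?case by simp
next
  case (step q1 u' w q2 a m q3)
  have "path p ((u @ u') @ word_of a) ((m1 * w) * m) q3"
    using step by (intro gen_trans.step) auto
  then show ?case by (simp add: mult.assoc)
qed

lemma path_split:
  assumes "path p w m r" shows "w = u @ v \<Longrightarrow> \<exists>q m1 m2. m = m1 * m2 \<and> path p u m1 q \<and> path q v m2 r"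
  using assms
proof (induction arbitrary: u v rule: gen_trans.induct)
  case (refl q)
  then show ?case by (intro exI[of _ q] exI[of _ 1]) (auto intro: gen_trans.refl)
next
  case (step q1 u' w q2 a mm q3)
  show ?case
  proof (cases a)
    case None
    hence "u' = u @ v" using step.prems by (simp add: word_of_def)
    then obtain q m1 m2 where h: "w = m1 * m2" "path q1 u m1 q" "path q v m2 q2" using step.IH by blast
    have "path q (v @ word_of a) (m2 * mm) q3" using h(3) step.hyps(2) by (rule gen_trans.step)
    hence "path q v (m2 * mm) q3" using None by (simp add: word_of_def)
    thus ?thesis using h by (intro exI[of _ q] exI[of _ m1] exI[of _ "m2 * mm"]) (simp add: mult.assoc)
  next
    case (Some s)
    show ?thesis
    proof (cases "v = []")
      case True
      have "path q1 (u' @ word_of a) (w * mm) q3" using step.hyps by (rule gen_trans.step)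
      thus ?thesis using True step.prems
        by (intro exI[of _ q3] exI[of _ "w * mm"] exI[of _ 1]) (auto intro: gen_trans.refl)
    next
      case False
      then obtain v' x where vx: "v = v' @ [x]" by (metis rev_exhaust)
      hence "u' @ [s] = (u @ v') @ [x]" using step.prems Some by (simp add: word_of_def)
      hence "u' = u @ v'" and sx: "s = x" by auto
      then obtain q m1 m2 where h: "w = m1 * m2" "path q1 u m1 q" "path q v' m2 q2" using step.IH by blast
      have "path q (v' @ word_of a) (m2 * mm) q3" using h(3) step.hyps(2) by (rule gen_trans.step)
      hence "path q v (m2 * mm) q3" using Some sx vx by (simp add: word_of_def)
      thus ?thesis using h by (intro exI[of _ q] exI[of _ m1] exI[of _ "m2 * mm"]) (simp add: mult.assoc)
    qed
  qed
qed

lemma path_Q: assumes "path p u m q" shows "p \<in> Q \<Longrightarrow> q \<in> Q"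
  using assms
proof (induction rule: gen_trans.induct)
  case (step q1 u w q2 a m q3)
  then show ?case using tr unfolding transducer_def by blast
qed simp

lemma path_back: assumes "path p u m q" shows "q \<in> Q \<Longrightarrow> p \<in> Q"
  using assms
proof (induction rule: gen_trans.induct)
  case (step q1 u w q2 a m q3)
  then show ?case using tr unfolding transducer_def by blast
qed simp

lemma lang_iff: "(u, m) \<in> trans_lang I F \<Delta> \<longleftrightarrow> (\<exists>p\<in>I. \<exists>f\<in>F. path p u m f)"
  by (simp add: trans_lang_def)

lemma fn': "(u, m) \<in> trans_lang I F \<Delta> \<Longrightarrow> (u, m') \<in> trans_lang I F \<Delta> \<Longrightarrow> m = m'"
  using fn unfolding functional_def by blast

definition reach :: "'a list \<Rightarrow> 'q set" where
  "reach u = {q. \<exists>p\<in>I. \<exists>m. path p u m q}"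
definition coreach :: "'a list \<Rightarrow> 'q set" where
  "coreach v = {q. \<exists>f\<in>F. \<exists>m. path q v m f}"
definition lft :: "'a list \<Rightarrow> 'q set" where
  "lft u = (if u = [] then I else reach u)"
definition rgt :: "'a list \<Rightarrow> 'q set" where
  "rgt v = (if v = [] then F else coreach v)"
definition alpha :: "'a list \<Rightarrow> 'q \<Rightarrow> 'm" where
  "alpha u q = (THE m. \<exists>p\<in>I. path p u m q)"
definition nxt :: "'q set \<Rightarrow> 'a \<Rightarrow> 'q set" where
  "nxt S \<sigma> = {q'. \<exists>q\<in>S. \<exists>m. path q [\<sigma>] m q'}"
definition prv :: "'q set \<Rightarrow> 'a \<Rightarrow> 'q set" where
  "prv S \<sigma> = {q. \<exists>q'\<in>S. \<exists>m. path q [\<sigma>] m q'}"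
definition CC :: "'a list \<Rightarrow> 'a list \<Rightarrow> 'q set" where
  "CC u v = lft u \<inter> rgt v"

lemma IQ: "I \<subseteq> Q" and FQ: "F \<subseteq> Q" and finQ: "finite Q"
  using tr unfolding transducer_def by auto

lemma lft_sub: "lft u \<subseteq> reach u"
  by (auto simp: lft_def reach_def intro: gen_trans.refl)

lemma rgt_sub: "rgt v \<subseteq> coreach v"
  by (auto simp: rgt_def coreach_def intro: gen_trans.refl)

lemma reach_Q: "reach u \<subseteq> Q"
  using path_Q IQ by (auto simp: reach_def)

lemma coreach_Q: "coreach v \<subseteq> Q"
  using path_back FQ by (auto simp: coreach_def)

lemma lft_Q: "lft u \<subseteq> Q" using lft_sub reach_Q by blast
lemma rgt_Q: "rgt v \<subseteq> Q" using rgt_sub coreach_Q by blast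

lemma nxt_Q: "S \<subseteq> Q \<Longrightarrow> nxt S \<sigma> \<subseteq> Q"
  using path_Q by (auto simp: nxt_def)

lemma prv_Q: "S \<subseteq> Q \<Longrightarrow> prv S \<sigma> \<subseteq> Q"
  using path_back by (auto simp: prv_def)

lemma finite_CC: "finite (CC u v)"
  using lft_Q finQ finite_subset unfolding CC_def by blast

lemma lft_snoc: "lft (u @ [\<sigma>]) = nxt (lft u) \<sigma>"
proof
  show "lft (u @ [\<sigma>]) \<subseteq> nxt (lft u) \<sigma>"
  proof
    fix q' assume "q' \<in> lft (u @ [\<sigma>])"
    then obtain p m where p: "p \<in> I" "path p (u @ [\<sigma>]) m q'" by (auto simp: lft_def reach_def)
    show "q' \<in> nxt (lft u) \<sigma>"
    proof (cases "u = []")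
      case True thus ?thesis using p by (auto simp: nxt_def lft_def)
    next
      case False
      obtain q m1 m2 where "path p u m1 q" "path q [\<sigma>] m2 q'" using path_split[OF p(2), of u "[\<sigma>]"] by blast
      thus ?thesis using p(1) False by (auto simp: nxt_def lft_def reach_def)
    qed
  qed
next
  show "nxt (lft u) \<sigma> \<subseteq> lft (u @ [\<sigma>])"
  proof
    fix q' assume "q' \<in> nxt (lft u) \<sigma>"
    then obtain q m where q: "q \<in> lft u" "path q [\<sigma>] m q'" by (auto simp: nxt_def)
    have "q \<in> reach u" using q(1) lft_sub by blast
    then obtain p m0 where p: "p \<in> I" "path p u m0 q" by (auto simp: reach_def)
    have "path p (u @ [\<sigma>]) (m0 * m) q'" using path_concat[OF q(2) p(2)] .
    thus "q' \<in> lft (u @ [\<sigma>])" using p(1) by (auto simp: lft_def reach_def)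
  qed
qed

lemma rgt_cons: "rgt (\<sigma> # v) = prv (rgt v) \<sigma>"
proof
  show "rgt (\<sigma> # v) \<subseteq> prv (rgt v) \<sigma>"
  proof
    fix q assume "q \<in> rgt (\<sigma> # v)"
    then obtain f m where f: "f \<in> F" "path q ([\<sigma>] @ v) m f" by (auto simp: rgt_def coreach_def)
    show "q \<in> prv (rgt v) \<sigma>"
    proof (cases "v = []")
      case True thus ?thesis using f by (auto simp: prv_def rgt_def)
    next
      case False
      obtain q' m1 m2 where "path q [\<sigma>] m1 q'" "path q' v m2 f" using path_split[OF f(2), of "[\<sigma>]" v] by blast
      thus ?thesis using f(1) False by (auto simp: prv_def rgt_def coreach_def)
    qed
  qed
next
  show "prv (rgt v) \<sigma> \<subseteq> rgt (\<sigma> # v)"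
  proof
    fix q assume "q \<in> prv (rgt v) \<sigma>"
    then obtain q' m where q: "q' \<in> rgt v" "path q [\<sigma>] m q'" by (auto simp: prv_def)
    have "q' \<in> coreach v" using q(1) rgt_sub by blast
    then obtain f m0 where f: "f \<in> F" "path q' v m0 f" by (auto simp: coreach_def)
    have "path q ([\<sigma>] @ v) (m * m0) f" using path_concat[OF f(2) q(2)] .
    thus "q \<in> rgt (\<sigma> # v)" using f(1) by (auto simp: rgt_def coreach_def)
  qed
qed

lemma alpha_eq:
  assumes p: "p \<in> I" "path p u m q" and q: "q \<in> coreach v"
  shows "alpha u q = m"
proof -
  obtain f z where f: "f \<in> F" "path q v z f" using q by (auto simp: coreach_def)
  have "(u @ v, m * z) \<in> trans_lang I F \<Delta>" using path_concat[OF f(2) p(2)] p(1) f(1) by (auto simp: lang_iff)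
  have "m' = m" if "p' \<in> I" "path p' u m' q" for p' m'
  proof -
    have "(u @ v, m' * z) \<in> trans_lang I F \<Delta>" using path_concat[OF f(2) that(2)] that(1) f(1) by (auto simp: lang_iff)
    hence "m' * z = m * z" using fn' \<open>(u @ v, m * z) \<in> _\<close> by blast
    thus ?thesis using rc[OF M] by blast
  qed
  thus ?thesis unfolding alpha_def using p by (intro the_equality) blast+
qed

lemma alpha_path: "q \<in> reach u \<Longrightarrow> q \<in> coreach v \<Longrightarrow> \<exists>p\<in>I. path p u (alpha u q) q"
  using alpha_eq by (auto simp: reach_def) 

lemma CC_nonempty:
  assumes "u @ v \<noteq> []"
  shows "CC u v \<noteq> {} \<longleftrightarrow> (\<exists>m. (u @ v, m) \<in> trans_lang I F \<Delta>)"
proof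
  assume "CC u v \<noteq> {}"
  then obtain q where "q \<in> reach u" "q \<in> coreach v" using lft_sub rgt_sub unfolding CC_def by blast
  then obtain p m f z where "p \<in> I" "path p u m q" "f \<in> F" "path q v z f" by (auto simp: reach_def coreach_def)
  thus "\<exists>m. (u @ v, m) \<in> trans_lang I F \<Delta>" using path_concat unfolding lang_iff by blast
next
  assume "\<exists>m. (u @ v, m) \<in> trans_lang I F \<Delta>"
  then obtain p f m where pf: "p \<in> I" "f \<in> F" "path p (u @ v) m f" by (auto simp: lang_iff)
  show "CC u v \<noteq> {}"
  proof (cases "u = []")
    case True
    hence "v \<noteq> []" using assms by simp
    hence "p \<in> CC u v" using True pf by (auto simp: CC_def lft_def rgt_def coreach_def)
    thus ?thesis by blast
  next
    case False
    show ?thesis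
    proof (cases "v = []")
      case True
      hence "f \<in> CC u v" using False pf by (auto simp: CC_def lft_def rgt_def reach_def)
      thus ?thesis by blast
    next
      case False2: False
      obtain q m1 m2 where "path p u m1 q" "path q v m2 f" using path_split[OF pf(3)] by blast
      hence "q \<in> CC u v" using False False2 pf by (auto simp: CC_def lft_def rgt_def reach_def coreach_def)
      thus ?thesis by blast
    qed
  qed
qed

lemma step_exists:
  assumes "p \<in> CC u (\<sigma> # v)"
  shows "\<exists>q' m. path p [\<sigma>] m q' \<and> q' \<in> CC (u @ [\<sigma>]) v"
proof -
  have "p \<in> prv (rgt v) \<sigma>" using assms rgt_cons unfolding CC_def by blast
  then obtain q' m where q': "q' \<in> rgt v" "path p [\<sigma>] m q'" by (auto simp: prv_def)
  have "q' \<in> nxt (lft u) \<sigma>" using assms q' unfolding CC_def nxt_def by blast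
  thus ?thesis using q' lft_snoc unfolding CC_def by auto
qed

lemma alpha_snoc:
  assumes p: "p \<in> CC u (\<sigma> # v)" and pq: "path p [\<sigma>] m q'" and q': "q' \<in> rgt v"
  shows "alpha (u @ [\<sigma>]) q' = alpha u p * m"
proof -
  have "p \<in> reach u" "p \<in> coreach (\<sigma> # v)" using p lft_sub rgt_sub unfolding CC_def by blast+
  then obtain p0 where p0: "p0 \<in> I" "path p0 u (alpha u p) p" using alpha_path by blast
  show ?thesis using alpha_eq[OF p0(1) path_concat[OF pq p0(2)]] q' rgt_sub by blast
qed

definition zv :: "'a list \<Rightarrow> 'q \<Rightarrow> 'm" where
  "zv v q = (SOME z. \<exists>f\<in>F. path q v z f)"

lemma zv_eqz:
  assumes C: "C \<subseteq> reach u" "C \<subseteq> coreach v"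
  shows "eqzT (alpha u) C (zv v)"
proof -
  have L: "(u @ v, alpha u q * zv v q) \<in> trans_lang I F \<Delta>" if q: "q \<in> C" for q
  proof -
    have qc: "q \<in> coreach v" using C q by blast
    then obtain p where p: "p \<in> I" "path p u (alpha u q) q" using alpha_path C q by blast
    have "\<exists>z. \<exists>f\<in>F. path q v z f" using qc by (auto simp: coreach_def)
    hence "\<exists>f\<in>F. path q v (zv v q) f" unfolding zv_def by (rule someI_ex)
    then obtain f where "f \<in> F" "path q v (zv v q) f" by blast
    thus ?thesis using path_concat p unfolding lang_iff by blast
  qed
  show ?thesis unfolding eqzT_def
  proof (intro ballI)
    fix p q assume p: "p \<in> C" and q: "q \<in> C"
    show "alpha u p * zv v p = alpha u q * zv v q" using fn'[OF L[OF p] L[OF q]] .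
  qed
qed

definition good :: "'q set \<Rightarrow> 'q set \<Rightarrow> ('q \<Rightarrow> 'm) \<Rightarrow> bool" where
  "good L R X \<longleftrightarrow> (\<forall>u v. lft u = L \<longrightarrow> rgt v = R \<longrightarrow> mgeT (alpha u) (L \<inter> R) X)"

definition Xf :: "'q set \<Rightarrow> 'q set \<Rightarrow> 'q \<Rightarrow> 'm" where
  "Xf L R = (if good L R (\<lambda>_. 1) then (\<lambda>_. 1) else (SOME X. good L R X))"

lemma good_from:
  assumes u0: "lft u0 = L" and v0: "rgt v0 = R" and X: "mgeT (alpha u0) (L \<inter> R) X"
  shows "good L R X"
  unfolding good_def
proof (intro allI impI)
  fix u v assume u: "lft u = L" and v: "rgt v = R"
  have fin: "finite (L \<inter> R)" using finite_CC[of u0 v0] u0 v0 unfolding CC_def by simp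
  have s1: "L \<inter> R \<subseteq> reach u0" "L \<inter> R \<subseteq> coreach v0" using lft_sub rgt_sub u0 v0 by blast+
  have s2: "L \<inter> R \<subseteq> reach u" using lft_sub u by blast
  show "mgeT (alpha u) (L \<inter> R) X"
    using mge_transfer[OF M fin X zv_eqz[OF s1] zv_eqz[OF s2 s1(2)]] .
qed

lemma Xf_good:
  assumes u0: "lft u0 = L" and v0: "rgt v0 = R"
  shows "good L R (Xf L R)"
proof (cases "good L R (\<lambda>_. 1)")
  case True thus ?thesis by (simp add: Xf_def)
next
  case False
  have fin: "finite (L \<inter> R)" using finite_CC[of u0 v0] u0 v0 unfolding CC_def by simp
  have s1: "L \<inter> R \<subseteq> reach u0" "L \<inter> R \<subseteq> coreach v0" using lft_sub rgt_sub u0 v0 by blast+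
  obtain X where "mgeT (alpha u0) (L \<inter> R) X" using mgeT_exists[OF M fin zv_eqz[OF s1]] by blast
  hence "good L R X" by (rule good_from[OF u0 v0])
  hence "good L R (SOME X. good L R X)" by (rule someI[of "good L R"])
  thus ?thesis using False by (simp add: Xf_def)
qed

lemma Xf_mge: "mgeT (alpha u) (CC u v) (Xf (lft u) (rgt v))"
  using Xf_good[of u "lft u" v "rgt v"] unfolding good_def CC_def by blast

lemma Xf_const:
  assumes k: "\<forall>q\<in>CC u v. alpha u q = k"
  shows "Xf (lft u) (rgt v) = (\<lambda>_. 1)"
proof -
  have "mgeT (alpha u) (lft u \<inter> rgt v) (\<lambda>_. 1)" using const_mgeT[OF M] k unfolding CC_def by blast
  hence "good (lft u) (rgt v) (\<lambda>_. 1)" by (rule good_from[OF HOL.refl HOL.refl])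
  thus ?thesis by (simp add: Xf_def)
qed

definition E :: "'a list \<Rightarrow> 'a list \<Rightarrow> 'm" where
  "E u v = alpha u (SOME q. q \<in> CC u v) * Xf (lft u) (rgt v) (SOME q. q \<in> CC u v)"

lemma E_eq: assumes q: "q \<in> CC u v" shows "alpha u q * Xf (lft u) (rgt v) q = E u v"
proof -
  have q0: "(SOME q. q \<in> CC u v) \<in> CC u v" using q by (rule someI)
  have "eqzT (alpha u) (CC u v) (Xf (lft u) (rgt v))" using Xf_mge unfolding mgeT_def by blast
  from eqzTD[OF this q q0] show ?thesis unfolding E_def .
qed

lemma E_nil: assumes "CC [] v \<noteq> {}" shows "E [] v = 1"
proof -
  obtain q where q: "q \<in> CC [] v" using assms by blast
  have k: "\<forall>q\<in>CC [] v. alpha [] q = 1"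
  proof
    fix q assume q: "q \<in> CC [] v"
    hence qi: "q \<in> I" and qc: "q \<in> coreach v" using rgt_sub by (auto simp: CC_def lft_def)
    show "alpha [] q = 1" using alpha_eq[OF qi gen_trans.refl qc] .
  qed
  have "E [] v = alpha [] q * Xf (lft []) (rgt v) q" using E_eq[OF q] by simp
  also have "\<dots> = 1" using Xf_const[OF k] k q by simp
  finally show ?thesis .
qed

lemma E_final:
  assumes u: "u \<noteq> []" and m: "(u, m) \<in> trans_lang I F \<Delta>"
  shows "CC u [] \<noteq> {}" and "E u [] = m"
proof -
  have un: "u @ [] \<noteq> []" using u by simp
  have "\<exists>m. (u @ [], m) \<in> trans_lang I F \<Delta>" using m by auto
  thus ne: "CC u [] \<noteq> {}" using CC_nonempty[OF un] by simp
  have k: "\<forall>q\<in>CC u []. alpha u q = m"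
  proof
    fix q assume q: "q \<in> CC u []"
    have q1: "q \<in> lft u" and q2: "q \<in> rgt []" using q unfolding CC_def by auto
    have qr: "q \<in> reach u" using q1 lft_sub by blast
    have qc: "q \<in> coreach []" using q2 rgt_sub by blast
    have qF: "q \<in> F" using q2 by (simp add: rgt_def)
    obtain p where "p \<in> I" "path p u (alpha u q) q" using alpha_path[OF qr qc] by blast
    hence "(u, alpha u q) \<in> trans_lang I F \<Delta>" using qF unfolding lang_iff by (intro bexI)
    from fn'[OF this m] show "alpha u q = m" .
  qed
  obtain q where q: "q \<in> CC u []" using ne by blast
  have "E u [] = alpha u q * Xf (lft u) (rgt []) q" using E_eq[OF q] by simp
  also have "\<dots> = m" using Xf_const[OF k] k q by simp
  finally show "E u [] = m" .
qed

definition psi0 :: "'q set \<Rightarrow> 'a \<Rightarrow> 'q set \<Rightarrow> 'm option" where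
  "psi0 L \<sigma> R' = (let R = prv R' \<sigma>; L' = nxt L \<sigma>; X = Xf L R; X' = Xf L' R' in
     if L \<inter> R = {} then None else
     Some (SOME y. \<exists>p\<in>L \<inter> R. \<exists>q'\<in>L' \<inter> R'. \<exists>m. path p [\<sigma>] m q' \<and> m * X' q' = X p * y))"

lemma psi0_none: "CC t (\<sigma> # v) = {} \<Longrightarrow> psi0 (lft t) \<sigma> (rgt v) = None"
  by (simp add: psi0_def CC_def rgt_cons[symmetric] Let_def)

lemma psi0_step:
  assumes ne: "CC t (\<sigma> # v) \<noteq> {}"
  shows "\<exists>y. psi0 (lft t) \<sigma> (rgt v) = Some y \<and> E t (\<sigma> # v) * y = E (t @ [\<sigma>]) v"
proof -
  define X where "X = Xf (lft t) (rgt (\<sigma> # v))"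
  define X' where "X' = Xf (lft (t @ [\<sigma>])) (rgt v)"
  define P where "P = (\<lambda>y. \<exists>p\<in>CC t (\<sigma> # v). \<exists>q'\<in>CC (t @ [\<sigma>]) v. \<exists>m. path p [\<sigma>] m q' \<and> m * X' q' = X p * y)"
  have ps: "psi0 (lft t) \<sigma> (rgt v) = Some (SOME y. P y)"
    using ne unfolding psi0_def P_def X_def X'_def CC_def
    by (simp add: rgt_cons[symmetric] lft_snoc[symmetric] Let_def)
  define qq where "qq = (\<lambda>p. SOME qm. path p [\<sigma>] (snd qm) (fst qm) \<and> fst qm \<in> CC (t @ [\<sigma>]) v)"
  have qq: "path p [\<sigma>] (snd (qq p)) (fst (qq p)) \<and> fst (qq p) \<in> CC (t @ [\<sigma>]) v" if pin: "p \<in> CC t (\<sigma> # v)" for p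
  proof -
    obtain q' m where "path p [\<sigma>] m q'" "q' \<in> CC (t @ [\<sigma>]) v" using step_exists[OF pin] by blast
    hence "\<exists>qm. path p [\<sigma>] (snd qm) (fst qm) \<and> fst qm \<in> CC (t @ [\<sigma>]) v" by (intro exI[of _ "(q', m)"]) simp
    thus ?thesis unfolding qq_def by (rule someI_ex)
  qed
  define Z where "Z = (\<lambda>p. snd (qq p) * X' (fst (qq p)))"
  have Zv: "alpha t p * Z p = E (t @ [\<sigma>]) v" if p: "p \<in> CC t (\<sigma> # v)" for p
  proof -
    have h: "path p [\<sigma>] (snd (qq p)) (fst (qq p))" "fst (qq p) \<in> CC (t @ [\<sigma>]) v" using qq[OF p] by auto
    have "alpha t p * Z p = (alpha t p * snd (qq p)) * X' (fst (qq p))" by (simp add: Z_def mult.assoc)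
    also have "\<dots> = alpha (t @ [\<sigma>]) (fst (qq p)) * X' (fst (qq p))"
      using alpha_snoc[OF p h(1)] h(2) by (simp add: CC_def)
    also have "\<dots> = E (t @ [\<sigma>]) v" using E_eq[OF h(2)] by (simp add: X'_def)
    finally show ?thesis .
  qed
  have "eqzT (alpha t) (CC t (\<sigma> # v)) Z" unfolding eqzT_def using Zv by simp
  then obtain s where s: "\<forall>p\<in>CC t (\<sigma> # v). Z p = X p * s" using Xf_mge[of t "\<sigma> # v"] unfolding mgeT_def X_def by blast
  obtain p0 where p0: "p0 \<in> CC t (\<sigma> # v)" using ne by blast
  have "P s" unfolding P_def
  proof (intro bexI exI conjI)
    show "p0 \<in> CC t (\<sigma> # v)" by (rule p0)
    show "fst (qq p0) \<in> CC (t @ [\<sigma>]) v" "path p0 [\<sigma>] (snd (qq p0)) (fst (qq p0))" using qq[OF p0] by auto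
    show "snd (qq p0) * X' (fst (qq p0)) = X p0 * s" using s p0 unfolding Z_def by blast
  qed
  hence "P (SOME y. P y)" by (rule someI[of P])
  then obtain p q' m where h: "p \<in> CC t (\<sigma> # v)" "q' \<in> CC (t @ [\<sigma>]) v" "path p [\<sigma>] m q'"
      "m * X' q' = X p * (SOME y. P y)" unfolding P_def by blast
  have e1: "E t (\<sigma> # v) = alpha t p * X p" using E_eq[OF h(1)] by (simp add: X_def)
  have "E t (\<sigma> # v) * (SOME y. P y) = alpha t p * (X p * (SOME y. P y))"
    unfolding e1 by (simp add: mult.assoc)
  also have "\<dots> = (alpha t p * m) * X' q'" using h(4) by (simp add: mult.assoc)
  also have "\<dots> = E (t @ [\<sigma>]) v" using alpha_snoc[OF h(1) h(3)] h(2) E_eq[OF h(2)] by (simp add: CC_def X'_def)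
  finally show ?thesis using ps by blast
qed

definition NN :: nat where "NN = card (Pow Q)"
definition hh :: "nat \<Rightarrow> 'q set" where "hh = (SOME h. bij_betw h {0..<NN} (Pow Q))"

lemma hh_bij: "bij_betw hh {0..<NN} (Pow Q)"
proof -
  have "\<exists>h. bij_betw h {0..<NN} (Pow Q)" unfolding NN_def using finQ by (intro ex_bij_betw_nat_finite) simp
  thus ?thesis unfolding hh_def by (rule someI_ex)
qed

definition enc :: "'q set \<Rightarrow> nat" where "enc S = inv_into {0..<NN} hh S"

lemma dec_enc: "S \<subseteq> Q \<Longrightarrow> hh (enc S) = S"
  unfolding enc_def using bij_betw_inv_into_right[OF hh_bij] by blast

lemma enc_in: "S \<subseteq> Q \<Longrightarrow> enc S \<in> {0..<NN}"
  unfolding enc_def using bij_betw_apply[OF bij_betw_inv_into[OF hh_bij]] by blast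

lemma dec_in: "n \<in> {0..<NN} \<Longrightarrow> hh n \<subseteq> Q"
  using bij_betw_apply[OF hh_bij] by blast

lemma card_NN: "card {0..<NN} = 2 ^ card Q"
  using finQ by (simp add: NN_def card_Pow)

definition dL :: "nat \<Rightarrow> 'a \<Rightarrow> nat" where "dL n \<sigma> = enc (nxt (hh n) \<sigma>)"
definition dR :: "nat \<Rightarrow> 'a \<Rightarrow> nat" where "dR n \<sigma> = enc (prv (hh n) \<sigma>)"
definition ps :: "nat \<Rightarrow> 'a \<Rightarrow> nat \<Rightarrow> 'm option" where "ps n \<sigma> r = psi0 (hh n) \<sigma> (hh r)"

lemma dfaL: "dfa {0..<NN} (enc I) dL"
  unfolding dfa_def dL_def
  by (intro conjI ballI allI finite_atLeastLessThan enc_in[OF IQ] enc_in[OF nxt_Q[OF dec_in]])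

lemma dfaR: "dfa {0..<NN} (enc F) dR"
  unfolding dfa_def dR_def
  by (intro conjI ballI allI finite_atLeastLessThan enc_in[OF FQ] enc_in[OF prv_Q[OF dec_in]])

lemma star_L: "dfa_star dL (enc I) t = enc (lft t)"
proof (induction t rule: rev_induct)
  case Nil
  then show ?case by (simp add: dfa_star_def lft_def)
next
  case (snoc \<sigma> t)
  have "dfa_star dL (enc I) (t @ [\<sigma>]) = dL (dfa_star dL (enc I) t) \<sigma>" by (simp add: dfa_star_def)
  also have "\<dots> = dL (enc (lft t)) \<sigma>" using snoc by simp
  also have "\<dots> = enc (nxt (lft t) \<sigma>)" using dec_enc[OF lft_Q] by (simp add: dL_def)
  also have "\<dots> = enc (lft (t @ [\<sigma>]))" by (simp add: lft_snoc)
  finally show ?case .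
qed

lemma dR_rgt: "dR (enc (rgt v)) \<sigma> = enc (rgt (\<sigma> # v))"
  using dec_enc[OF rgt_Q] by (simp add: dR_def rgt_cons)

lemma main_inv:
  "psi_star dL dR ps (enc I) t (enc (rgt v)) =
     (if t = [] then Some 1 else if CC t v \<noteq> {} then Some (E t v) else None)"
proof (induction t arbitrary: v rule: rev_induct)
  case Nil
  then show ?case by (simp add: psi_star_Nil)
next
  case (snoc \<sigma> t)
  have ps_eq: "ps (dfa_star dL (enc I) t) \<sigma> (enc (rgt v)) = psi0 (lft t) \<sigma> (rgt v)"
    using star_L dec_enc[OF lft_Q] dec_enc[OF rgt_Q] by (simp add: ps_def)
  have IH: "psi_star dL dR ps (enc I) t (dR (enc (rgt v)) \<sigma>) =
     (if t = [] then Some 1 else if CC t (\<sigma> # v) \<noteq> {} then Some (E t (\<sigma> # v)) else None)"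
    using snoc.IH[of "\<sigma> # v"] by (simp add: dR_rgt)
  have w1: "(t @ [\<sigma>]) @ v \<noteq> []" and w2: "t @ (\<sigma> # v) \<noteq> []" by simp_all
  have iff: "CC (t @ [\<sigma>]) v \<noteq> {} \<longleftrightarrow> CC t (\<sigma> # v) \<noteq> {}"
    using CC_nonempty[OF w1] CC_nonempty[OF w2] by simp
  note eq = psi_star_snoc[of dL dR ps "enc I" t \<sigma> "enc (rgt v)", unfolded ps_eq]
  show ?case
  proof (cases "CC t (\<sigma> # v) = {}")
    case True
    have "psi_star dL dR ps (enc I) (t @ [\<sigma>]) (enc (rgt v)) = None"
      unfolding eq psi0_none[OF True] by (simp split: option.split)
    then show ?thesis using iff True by simp
  next
    case False
    obtain y where y: "psi0 (lft t) \<sigma> (rgt v) = Some y" "E t (\<sigma> # v) * y = E (t @ [\<sigma>]) v"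
      using psi0_step[OF False] by blast
    have IH': "psi_star dL dR ps (enc I) t (dR (enc (rgt v)) \<sigma>) = Some (E t (\<sigma> # v))"
      using IH False E_nil by auto
    have "psi_star dL dR ps (enc I) (t @ [\<sigma>]) (enc (rgt v)) = Some (E (t @ [\<sigma>]) v)"
      unfolding eq IH' y(1) using y(2) by simp
    then show ?thesis using iff False by simp
  qed
qed

lemma final: "bimachine_output (enc I) dL (enc F) dR ps t = trans_output I F \<Delta> t"
proof -
  have "enc F = enc (rgt [])" by (simp add: rgt_def)
  hence bo: "bimachine_output (enc I) dL (enc F) dR ps t =
     (if t = [] then Some 1 else if CC t [] \<noteq> {} then Some (E t []) else None)"
    using main_inv[of t "[]"] by (simp add: bimachine_output_def)
  show ?thesis
  proof (cases "t = []")
    case True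
    have "(THE m. ([], m) \<in> trans_lang I F \<Delta>) = 1" using eps fn' by (intro the_equality) blast+
    then show ?thesis using True bo eps unfolding trans_output_def by auto
  next
    case False
    have w: "t @ [] \<noteq> []" using False by simp
    show ?thesis
    proof (cases "\<exists>m. (t, m) \<in> trans_lang I F \<Delta>")
      case True
      then obtain m where m: "(t, m) \<in> trans_lang I F \<Delta>" by blast
      have "(THE m. (t, m) \<in> trans_lang I F \<Delta>) = m" using m fn' by (intro the_equality) blast+
      then show ?thesis using E_final[OF False m] bo False True unfolding trans_output_def by auto
    next
      case nf: False
      hence "CC t [] = {}" using CC_nonempty[OF w] by simp
      then show ?thesis using bo False nf unfolding trans_output_def by auto
    qed
  qed
qed

end

theorem theorem2:
  fixes Q I F :: "'q set"
    and \<Delta> :: "('q \<times> ('a::finite option \<times> 'm::monoid_mult) \<times> 'q) set"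
  assumes "mge_monoid TYPE('m)"
    and "transducer Q I F \<Delta>"
    and "functional I F \<Delta>"
    and "([], 1) \<in> trans_lang I F \<Delta>"
  shows "\<exists>(Ls :: nat set) sL \<delta>L (Rs :: nat set) sR \<delta>R (\<psi> :: nat \<Rightarrow> 'a \<Rightarrow> nat \<Rightarrow> 'm option).
           dfa Ls sL \<delta>L \<and> dfa Rs sR \<delta>R \<and>
           card Ls \<le> 2 ^ card Q \<and> card Rs \<le> 2 ^ card Q \<and>
           (\<forall>t. bimachine_output sL \<delta>L sR \<delta>R \<psi> t = trans_output I F \<Delta> t)"
proof -
  interpret td Q I F \<Delta> by unfold_locales (rule assms)+
  show ?thesis
    using dfaL dfaR card_NN final
    by (intro exI[of _ "{0..<NN}"] exI[of _ "enc I"] exI[of _ dL] exI[of _ "{0..<NN}"]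
        exI[of _ "enc F"] exI[of _ dR] exI[of _ ps]) simp
qed

end
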